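(* Every branch of a minimal tree is itself a minimal tree (i.e., if $T$ is minimal and $H$ is a branch of $T$ with $|H|=k$, then $I(H)=m_k$).
   Context: A rooted tree $T$ is a finite tree with a distinguished vertex, its root; its order $|T|$ is its number of vertices. For vertices $u,v$, the infimum of $u$ and $v$ is the vertex common to the path from $u$ to the root and the path from $v$ to the root that is furthest from the root. A set $X\subseteq V(T)$ is infima closed if the infimum of any two elements of $X$ lies in $X$. $I(T)$ denotes the number of nonempty infima closed subsets of $V(T)$. For $n\ge1$, $m_n=\min\{I(T): T \text{ a rooted tree with } n \text{ vertices}\}$; a rooted tree $T$ with $I(T)=m_{|T|}$ is called minimal. A branch of $T$ is the subtree consisting of a vertex $v$ together with all its descendants, rooted at $v$. *)

theory Defs
  imports Main "HOL-Library.Sublist"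
begin

text \<open>Rooted trees, represented as rose trees (children in a list; the order of the
children is irrelevant for all notions below). A vertex is addressed by its path
from the root: a list of child indices.\<close>

datatype rtree = Node "rtree list"

inductive is_vert :: "rtree \<Rightarrow> nat list \<Rightarrow> bool" where
  root: "is_vert T []"
| child: "i < length ts \<Longrightarrow> is_vert (ts ! i) p \<Longrightarrow> is_vert (Node ts) (i # p)"

definition verts :: "rtree \<Rightarrow> nat list set" where
  "verts T = {p. is_vert T p}"

definition order :: "rtree \<Rightarrow> nat" where
  "order T = card (verts T)"

text \<open>Infimum of two vertices: the last common vertex of their root paths,
i.e. the longest common prefix of their addresses.\<close>
definition tinf :: "nat list \<Rightarrow> nat list \<Rightarrow> nat list" where
  "tinf u v = longest_common_prefix u v"

definition infima_closed :: "nat list set \<Rightarrow> bool" where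
  "infima_closed X \<longleftrightarrow> (\<forall>u\<in>X. \<forall>v\<in>X. tinf u v \<in> X)"

definition I :: "rtree \<Rightarrow> nat" where
  "I T = card {X. X \<subseteq> verts T \<and> X \<noteq> {} \<and> infima_closed X}"

definition m :: "nat \<Rightarrow> nat" where
  "m n = Inf {I T | T. order T = n}"

definition minimal :: "rtree \<Rightarrow> bool" where
  "minimal T \<longleftrightarrow> I T = m (order T)"

fun branch :: "rtree \<Rightarrow> nat list \<Rightarrow> rtree" where
  "branch T [] = T"
| "branch (Node ts) (i # p) = branch (ts ! i) p"

end

theory Submission
  imports Defs
begin

lemma tinf_app: "tinf (p @ a) (p @ b) = p @ tinf a b"
  unfolding tinf_def by (induction p) auto

lemma tinf_comm: "tinf a b = tinf b a"
  unfolding tinf_def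
  by (induction a b rule: longest_common_prefix.induct) auto

lemma tinf_out: "\<not> prefix p z \<Longrightarrow> tinf z (p @ q) = tinf z p"
  unfolding tinf_def
proof (induction p arbitrary: z)
  case Nil then show ?case by simp
next
  case (Cons a p)
  then show ?case by (cases z) auto
qed

lemma tinf_out2: "\<not> prefix p z \<Longrightarrow> \<not> prefix p (tinf z p)"
  unfolding tinf_def using longest_common_prefix_prefix1 prefix_order.trans by blast

lemma is_vert_Cons: "is_vert (Node ts) (j # x) \<longleftrightarrow> j < length ts \<and> is_vert (ts ! j) x"
  by (auto elim: is_vert.cases intro: is_vert.intros)

lemma is_vert_Node: "is_vert (Node ts) x \<longleftrightarrow> x = [] \<or> (\<exists>i<length ts. \<exists>y. x = i # y \<and> is_vert (ts ! i) y)"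
  by (cases x) (auto simp: is_vert_Cons intro: is_vert.intros)

lemma finite_verts: "finite (verts T)"
proof (induction T)
  case (Node ts)
  have "verts (Node ts) = insert [] (\<Union>i<length ts. (Cons i) ` verts (ts ! i))"
    unfolding verts_def by (auto simp: is_vert_Node image_iff) (blast intro: lessThan_iff[THEN iffD2])
  moreover have "\<forall>i<length ts. finite (verts (ts ! i))" using Node by simp
  ultimately show ?case by simp
qed

lemma is_vert_app: "is_vert T (p @ q) \<longleftrightarrow> is_vert T p \<and> is_vert (branch T p) q"
proof (induction p arbitrary: T)
  case Nil then show ?case by (simp add: is_vert.root)
next
  case (Cons i p)
  obtain ts where T: "T = Node ts" by (cases T)
  show ?case using Cons by (auto simp: T is_vert_Cons)
qed

fun repl :: "rtree \<Rightarrow> nat list \<Rightarrow> rtree \<Rightarrow> rtree" where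
  "repl T [] S = S"
| "repl (Node ts) (i # p) S = Node (ts[i := repl (ts ! i) p S])"

lemma is_vert_repl: "is_vert T p \<Longrightarrow> is_vert (repl T p S) x \<longleftrightarrow>
   (if prefix p x then is_vert S (drop (length p) x) else is_vert T x)"
proof (induction p arbitrary: T x)
  case Nil then show ?case by simp
next
  case (Cons i p)
  obtain ts where T: "T = Node ts" by (cases T)
  have i: "i < length ts" "is_vert (ts ! i) p" using Cons.prems by (auto simp: T is_vert_Cons)
  show ?case
  proof (cases x)
    case Nil then show ?thesis by (simp add: T is_vert.root)
  next
    case (Cons j y)
    show ?thesis
    proof (cases "j = i")
      case True
      then show ?thesis using Cons.IH[OF i(2), of y] i by (auto simp: T \<open>x = j # y\<close> is_vert_Cons)
    next
      case False
      then show ?thesis using i by (auto simp: T \<open>x = j # y\<close> is_vert_Cons)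
    qed
  qed
qed

lemma verts_split:
  assumes "p \<in> verts T"
  shows "verts T = {x \<in> verts T. \<not> prefix p x} \<union> (@) p ` verts (branch T p)"
  using assms unfolding verts_def
  by (auto simp: is_vert_app prefix_def)

lemma verts_repl_split:
  assumes "p \<in> verts T"
  shows "verts (repl T p S) = {x \<in> verts T. \<not> prefix p x} \<union> (@) p ` verts S"
  using assms unfolding verts_def
  apply (auto simp: is_vert_repl prefix_def image_iff split: if_splits)
  done

lemma branch_repl: "is_vert T p \<Longrightarrow> branch (repl T p S) p = S"
proof (induction p arbitrary: T)
  case Nil then show ?case by simp
next
  case (Cons i p)
  obtain ts where T: "T = Node ts" by (cases T)
  show ?case using Cons by (auto simp: T is_vert_Cons)
qed

definition Cset :: "nat list set \<Rightarrow> nat list \<Rightarrow> nat list set set" where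
  "Cset U p = {Z. Z \<subseteq> U \<and> infima_closed Z \<and> (\<forall>z\<in>Z. tinf z p \<in> Z)}"

lemma Cset_pos: "finite U \<Longrightarrow> card (Cset U p) \<ge> 1"
proof -
  assume "finite U"
  then have "finite (Cset U p)" unfolding Cset_def
    by (rule finite_subset[rotated, OF finite_Pow_iff[THEN iffD2]]) auto
  moreover have "{} \<in> Cset U p" unfolding Cset_def infima_closed_def by auto
  ultimately show ?thesis by (metis One_nat_def Suc_leI card_gt_0_iff empty_iff)
qed

lemma decomp:
  fixes U S :: "nat list set" and p :: "nat list"
  assumes fU: "finite U" and fS: "finite S" and out: "\<forall>x\<in>U. \<not> prefix p x"
  shows "card {X. X \<subseteq> U \<union> (@) p ` S \<and> X \<noteq> {} \<and> infima_closed X}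
       = card {X. X \<subseteq> U \<and> X \<noteq> {} \<and> infima_closed X}
         + card (Cset U p) * card {Y. Y \<subseteq> S \<and> Y \<noteq> {} \<and> infima_closed Y}"
proof -
  define V where "V = U \<union> (@) p ` S"
  define All where "All = {X. X \<subseteq> V \<and> X \<noteq> {} \<and> infima_closed X}"
  define P1 where "P1 = {X \<in> All. X \<subseteq> U}"
  define P2 where "P2 = {X \<in> All. \<not> X \<subseteq> U}"
  define Ys where "Ys = {Y. Y \<subseteq> S \<and> Y \<noteq> {} \<and> infima_closed Y}"
  have fV: "finite V" using fU fS V_def by simp
  have fAll: "finite All" unfolding All_def
    by (rule finite_subset[rotated, OF finite_Pow_iff[THEN iffD2, OF fV]]) auto
  have split: "All = P1 \<union> P2" "P1 \<inter> P2 = {}" unfolding P1_def P2_def by auto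
  have c1: "card All = card P1 + card P2"
    using split fAll by (simp add: card_Un_disjoint)
  have P1eq: "P1 = {X. X \<subseteq> U \<and> X \<noteq> {} \<and> infima_closed X}"
    unfolding P1_def All_def V_def by auto
  have pU: "p @ q \<notin> U" for q using out by auto
  have inU: "x \<in> U" if "x \<in> V" "\<not> prefix p x" for x using that unfolding V_def by auto
  define f where "f X = (X \<inter> U, {q. p @ q \<in> X})" for X
  define g where "g ZY = fst ZY \<union> (@) p ` snd ZY" for ZY :: "nat list set \<times> nat list set"
  have bij: "bij_betw f P2 (Cset U p \<times> Ys)"
  proof (rule bij_betw_byWitness[where f'=g])
    show "\<forall>a\<in>P2. g (f a) = a"
    proof
      fix X assume "X \<in> P2"
      then have "X \<subseteq> V" unfolding P2_def All_def by auto
      then show "g (f X) = X" unfolding f_def g_def V_def by auto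
    qed
    show "\<forall>a'\<in>Cset U p \<times> Ys. f (g a') = a'"
    proof
      fix ZY assume "ZY \<in> Cset U p \<times> Ys"
      then obtain Z Y where ZY: "ZY = (Z, Y)" "Z \<subseteq> U" by (auto simp: Cset_def)
      have "(Z \<union> (@) p ` Y) \<inter> U = Z" using ZY pU by auto
      moreover have "{q. p @ q \<in> Z \<union> (@) p ` Y} = Y" using ZY pU by auto
      ultimately show "f (g ZY) = ZY" unfolding f_def g_def ZY by simp
    qed
    show "f ` P2 \<subseteq> Cset U p \<times> Ys"
    proof
      fix W assume "W \<in> f ` P2"
      then obtain X where X: "X \<in> P2" "W = f X" by auto
      have XV: "X \<subseteq> V" and Xc: "infima_closed X" and XU: "\<not> X \<subseteq> U"
        using X unfolding P2_def All_def by auto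
      obtain y where y: "y \<in> X" "y \<notin> U" using XU by auto
      then obtain q0 where q0: "y = p @ q0" using XV unfolding V_def by auto
      have cl: "tinf a b \<in> X" if "a \<in> X" "b \<in> X" for a b
        using Xc that unfolding infima_closed_def by auto
      have A: "X \<inter> U \<in> Cset U p"
        unfolding Cset_def infima_closed_def
      proof (intro CollectI conjI ballI)
        fix a b assume ab: "a \<in> X \<inter> U" "b \<in> X \<inter> U"
        have "\<not> prefix p (tinf a b)"
          using ab out longest_common_prefix_prefix1 prefix_order.trans unfolding tinf_def by blast
        then show "tinf a b \<in> X \<inter> U" using cl[of a b] ab XV inU by auto
      next
        fix z assume z: "z \<in> X \<inter> U"
        have "tinf z y = tinf z p" using tinf_out[of p z q0] z out q0 by auto
        moreover have "\<not> prefix p (tinf z p)" using tinf_out2 z out by auto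
        ultimately show "tinf z p \<in> X \<inter> U" using cl[of z y] y z XV inU by auto
      qed auto
      have B1: "{q. p @ q \<in> X} \<subseteq> S" using XV pU unfolding V_def by auto
      have B2: "{q. p @ q \<in> X} \<noteq> {}" using y q0 by auto
      have B3: "infima_closed {q. p @ q \<in> X}" unfolding infima_closed_def
      proof (intro ballI)
        fix a b assume "a \<in> {q. p @ q \<in> X}" "b \<in> {q. p @ q \<in> X}"
        then have "tinf (p @ a) (p @ b) \<in> X" using cl by simp
        then show "tinf a b \<in> {q. p @ q \<in> X}" by (simp add: tinf_app)
      qed
      have B: "{q. p @ q \<in> X} \<in> Ys" using B1 B2 B3 unfolding Ys_def by simp
      show "W \<in> Cset U p \<times> Ys" using A B X f_def by auto
    qed
    show "g ` (Cset U p \<times> Ys) \<subseteq> P2"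
    proof
      fix W assume "W \<in> g ` (Cset U p \<times> Ys)"
      then obtain Z Y where ZY: "Z \<in> Cset U p" "Y \<in> Ys" "W = Z \<union> (@) p ` Y"
        unfolding g_def by auto
      have ZU: "Z \<subseteq> U" and Zc: "infima_closed Z" and Zp: "\<forall>z\<in>Z. tinf z p \<in> Z"
        using ZY unfolding Cset_def by auto
      have YS: "Y \<subseteq> S" and Yne: "Y \<noteq> {}" and Yc: "infima_closed Y"
        using ZY unfolding Ys_def by auto
      have "infima_closed W" unfolding infima_closed_def
      proof (intro ballI)
        fix a b assume a: "a \<in> W" and b: "b \<in> W"
        show "tinf a b \<in> W"
        proof (cases "a \<in> Z")
          case aZ: True
          show ?thesis
          proof (cases "b \<in> Z")
            case True then show ?thesis using aZ Zc ZY(3) unfolding infima_closed_def by auto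
          next
            case False
            then obtain q where "b = p @ q" using b ZY(3) by auto
            then have "tinf a b = tinf a p" using tinf_out[of p a q] aZ ZU out by auto
            then show ?thesis using Zp aZ ZY(3) by auto
          qed
        next
          case aZ: False
          then obtain qa where qa: "a = p @ qa" "qa \<in> Y" using a ZY(3) by auto
          show ?thesis
          proof (cases "b \<in> Z")
            case True
            then have "tinf b a = tinf b p" using tinf_out[of p b qa] qa True ZU out by auto
            then have "tinf a b = tinf b p" using tinf_comm[of a b] by simp
            then show ?thesis using Zp True ZY(3) by auto
          next
            case False
            then obtain qb where "b = p @ qb" "qb \<in> Y" using b ZY(3) by auto
            then show ?thesis using qa tinf_app Yc ZY(3) unfolding infima_closed_def by auto
          qed
        qed
      qed
      moreover have "W \<subseteq> V" using ZU YS ZY(3) unfolding V_def by auto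
      moreover have "\<not> W \<subseteq> U" using Yne pU ZY(3) by auto
      ultimately show "W \<in> P2" unfolding P2_def All_def by auto
    qed
  qed
  have "card P2 = card (Cset U p) * card Ys"
    using bij_betw_same_card[OF bij] by (simp add: card_cartesian_product)
  then show ?thesis using c1 P1eq unfolding All_def V_def Ys_def by simp
qed

lemma m_le: "order T = n \<Longrightarrow> m n \<le> I T"
  unfolding m_def Inf_nat_def by (rule Least_le) blast

lemma card_split:
  assumes "finite U" "finite S" "\<forall>x\<in>U. \<not> prefix p x"
  shows "card (U \<union> (@) p ` S) = card U + card S"
proof -
  have "U \<inter> (@) p ` S = {}" using assms(3) by auto
  then have "card (U \<union> (@) p ` S) = card U + card ((@) p ` S)"
    using assms by (simp add: card_Un_disjoint)
  moreover have "card ((@) p ` S) = card S" by (rule card_image) (simp add: inj_on_def)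
  ultimately show ?thesis by simp
qed

theorem lemma2p1:
  fixes T H :: rtree and p :: "nat list" and k :: nat
  assumes "minimal T"
    and "p \<in> verts T"
    and "H = branch T p"
    and "order H = k"
  shows "I H = m k"
proof (rule ccontr)
  assume ne: "I H \<noteq> m k"
  have le: "m k \<le> I H" using m_le assms(4) by blast
  have "m k \<in> {I T | T. order T = k}" unfolding m_def
    by (rule Inf_nat_def1) (use assms(4) in blast)
  then obtain H' where H': "order H' = k" "I H' = m k" by auto
  define U where "U = {x \<in> verts T. \<not> prefix p x}"
  have fU: "finite U" unfolding U_def using finite_verts by simp
  have out: "\<forall>x\<in>U. \<not> prefix p x" unfolding U_def by simp
  have vp: "is_vert T p" using assms(2) unfolding verts_def by simp
  define T' where "T' = repl T p H'"
  have v1: "verts T = U \<union> (@) p ` verts H" using verts_split[OF assms(2)] assms(3) U_def by simp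
  have v2: "verts T' = U \<union> (@) p ` verts H'" using verts_repl_split[OF assms(2)] T'_def U_def by simp
  have I1: "I T = card {X. X \<subseteq> U \<and> X \<noteq> {} \<and> infima_closed X} + card (Cset U p) * I H"
    unfolding I_def v1 by (rule decomp[OF fU finite_verts out])
  have I2: "I T' = card {X. X \<subseteq> U \<and> X \<noteq> {} \<and> infima_closed X} + card (Cset U p) * I H'"
    unfolding I_def v2 by (rule decomp[OF fU finite_verts out])
  have C: "card (Cset U p) \<ge> 1" using Cset_pos fU by blast
  have lt: "I H' < I H" using ne le H' by simp
  have "card (Cset U p) * I H' < card (Cset U p) * I H" using C lt by simp
  then have "I T' < I T" using I1 I2 by simp
  moreover have "order T' = order T"
    unfolding order_def v1 v2 using card_split[OF fU finite_verts out] H'(1) assms(4)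
    by (simp add: order_def)
  ultimately have "I T' < m (order T')" using assms(1) unfolding minimal_def by simp
  then show False using m_le[of T' "order T'"] by simp
qed

end
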